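(* Let $(\tau_\Sigma,\mathbb{B}_\Sigma)_\Sigma$ be a family indexed by the finite sets $\Sigma$ with at least two elements, where $\tau_\Sigma$ is a topology on $\Sigma^{\mathbb{N}}$ and $\mathbb{B}_\Sigma$ is a basis of $\tau_\Sigma$, satisfying: (P1) $\mathbb{B}_\Sigma$ contains every set $N_w$, $w\in\Sigma^*$; (P2) $\mathbb{B}_\Sigma$ is closed under finite unions and finite intersections; (P3) if $\Gamma$ is a finite set with at least two elements and $L\in\mathbb{B}_{\Sigma\times\Gamma}$, then $\pi_0[L]\in\mathbb{B}_\Sigma$; (P4) for each $L\in\mathbb{B}_\Sigma$ there is $C\in\mathbb{B}_{\Sigma\times 2}$ with $C\subseteq\Sigma^{\mathbb{N}}\times\mathbb{P}_\infty$, $C$ closed in $\Sigma^{\mathbb{N}}\times\mathbb{P}_\infty$ (i.e. $C=F\cap(\Sigma^{\mathbb{N}}\times\mathbb{P}_\infty)$ for some $\tau_C$-closed $F\subseteq\Sigma^{\mathbb{N}}\times 2^{\mathbb{N}}$), and $L=\pi_0[C]$. Then every topology $\tau_\Sigma$ is strong Choquet.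
   Context: $N_w=\{\sigma\in\Sigma^{\mathbb{N}}: w\text{ prefix of }\sigma\}$; $\tau_C$ denotes the product-of-discrete (Cantor) topology. $2=\{0,1\}$ and $\mathbb{P}_\infty=\{\alpha\in 2^{\mathbb{N}}: \alpha(i)=1\text{ for infinitely many } i\}$. The space $\Sigma^{\mathbb{N}}\times\Gamma^{\mathbb{N}}$ is identified with $(\Sigma\times\Gamma)^{\mathbb{N}}$ via $(\sigma,\gamma)\mapsto((\sigma(n),\gamma(n)))_n$, and $\pi_0$ is the projection onto the first coordinate. Strong Choquet game on a space $X$: Player 1 plays an open $U_i$ and $x_i\in U_i$ with $U_i\subseteq V_{i-1}$; Player 2 plays an open $V_i$ with $x_i\in V_i\subseteq U_i$; Player 2 wins if $\bigcap_i V_i\neq\emptyset$. $X$ is strong Choquet if it is nonempty and Player 2 has a winning strategy. *)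

theory Defs
  imports "HOL-Analysis.Analysis"
begin

text \<open>A universe of letters, closed under pairing, so that alphabets
  (finite sets with at least two elements) and their products Sigma x Gamma can
  all be treated uniformly as finite sets of one HOL type.\<close>
datatype letter = Atom nat | LPair letter letter

fun lfst :: "letter \<Rightarrow> letter" where
  "lfst (LPair a b) = a" | "lfst (Atom n) = Atom n"

fun lsnd :: "letter \<Rightarrow> letter" where
  "lsnd (LPair a b) = b" | "lsnd (Atom n) = Atom n"

definition alphabet :: "letter set \<Rightarrow> bool" where
  "alphabet S \<longleftrightarrow> finite S \<and> card S \<ge> 2"

definition prodA :: "letter set \<Rightarrow> letter set \<Rightarrow> letter set" where
  "prodA S G = {LPair a b | a b. a \<in> S \<and> b \<in> G}"

definition two :: "letter set" where
  "two = {Atom 0, Atom 1}"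

definition seqs :: "letter set \<Rightarrow> (nat \<Rightarrow> letter) set" where
  "seqs S = {\<sigma>. \<forall>n. \<sigma> n \<in> S}"

definition cyl :: "letter set \<Rightarrow> letter list \<Rightarrow> (nat \<Rightarrow> letter) set" where
  "cyl S w = {\<sigma> \<in> seqs S. \<forall>i < length w. \<sigma> i = w ! i}"

definition proj0 :: "(nat \<Rightarrow> letter) \<Rightarrow> (nat \<Rightarrow> letter)" where
  "proj0 \<rho> = (\<lambda>n. lfst (\<rho> n))"

definition proj1 :: "(nat \<Rightarrow> letter) \<Rightarrow> (nat \<Rightarrow> letter)" where
  "proj1 \<rho> = (\<lambda>n. lsnd (\<rho> n))"

definition Pinf :: "(nat \<Rightarrow> letter) set" where
  "Pinf = {\<alpha> \<in> seqs two. infinite {i. \<alpha> i = Atom 1}}"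

text \<open>Sigma^N x P_infty, as a subset of (Sigma x 2)^N.\<close>
definition seqs_Pinf :: "letter set \<Rightarrow> (nat \<Rightarrow> letter) set" where
  "seqs_Pinf S = {\<rho> \<in> seqs (prodA S two). proj1 \<rho> \<in> Pinf}"

definition cantor_top :: "letter set \<Rightarrow> (nat \<Rightarrow> letter) topology" where
  "cantor_top A = product_topology (\<lambda>_::nat. discrete_topology A) UNIV"

definition is_basis :: "'a topology \<Rightarrow> 'a set set \<Rightarrow> bool" where
  "is_basis T B \<longleftrightarrow> (\<forall>U\<in>B. openin T U) \<and>
     (\<forall>U. openin T U \<longrightarrow> (\<exists>B'. B' \<subseteq> B \<and> \<Union>B' = U))"

text \<open>Strong Choquet game. A strategy for Player 2 maps the history of
  Player 1's moves (U_0,x_0),...,(U_n,x_n) to V_n.\<close>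
definition resp :: "(('a set \<times> 'a) list \<Rightarrow> 'a set) \<Rightarrow> (nat \<Rightarrow> 'a set) \<Rightarrow> (nat \<Rightarrow> 'a) \<Rightarrow> nat \<Rightarrow> 'a set" where
  "resp s u x n = s (map (\<lambda>i. (u i, x i)) [0..<Suc n])"

definition p1_legal :: "'a topology \<Rightarrow> (('a set \<times> 'a) list \<Rightarrow> 'a set) \<Rightarrow> (nat \<Rightarrow> 'a set) \<Rightarrow> (nat \<Rightarrow> 'a) \<Rightarrow> nat \<Rightarrow> bool" where
  "p1_legal T s u x k \<longleftrightarrow> openin T (u k) \<and> x k \<in> u k \<and>
     (\<forall>m. k = Suc m \<longrightarrow> u k \<subseteq> resp s u x m)"

definition strong_choquet :: "'a topology \<Rightarrow> bool" where
  "strong_choquet T \<longleftrightarrow> topspace T \<noteq> {} \<and>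
     (\<exists>s. (\<forall>u x n. (\<forall>k\<le>n. p1_legal T s u x k) \<longrightarrow>
                 openin T (resp s u x n) \<and> x n \<in> resp s u x n \<and> resp s u x n \<subseteq> u n) \<and>
          (\<forall>u x. (\<forall>k. p1_legal T s u x k) \<longrightarrow> (\<Inter>n. resp s u x n) \<noteq> {}))"

end

theory Submission
  imports Defs
begin

lemma closed_lim:
  assumes F: "closedin (cantor_top A) F" and tau: "\<tau> \<in> seqs A"
    and approx: "\<And>N. \<exists>\<rho>\<in>F. \<forall>j<N. \<rho> j = \<tau> j"
  shows "\<tau> \<in> F"
proof (rule ccontr)
  assume nF: "\<tau> \<notin> F"
  have tsp: "topspace (cantor_top A) = {f. \<forall>i. f i \<in> A}"
    unfolding cantor_top_def topspace_product_topology topspace_discrete_topology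
    by (simp add: PiE_def extensional_def Pi_def)
  have op: "openin (cantor_top A) (topspace (cantor_top A) - F)"
    using F closedin_def by blast
  have tin: "\<tau> \<in> topspace (cantor_top A) - F" using tau nF tsp by (auto simp: seqs_def)
  have "\<forall>x \<in> topspace (cantor_top A) - F. \<exists>U. finite {i \<in> UNIV. U i \<noteq> topspace (discrete_topology A)} \<and>
       (\<forall>i \<in> UNIV. openin (discrete_topology A) (U i)) \<and> x \<in> Pi\<^sub>E UNIV U \<and>
       Pi\<^sub>E UNIV U \<subseteq> topspace (cantor_top A) - F"
    using op unfolding cantor_top_def openin_product_topology_alt .
  then obtain U where U0: "finite {i \<in> UNIV. U i \<noteq> topspace (discrete_topology A)}" "\<tau> \<in> Pi\<^sub>E UNIV U"
      "Pi\<^sub>E UNIV U \<subseteq> topspace (cantor_top A) - F"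
    using tin by blast
  have U: "finite {i \<in> UNIV. U i \<noteq> A}" "\<tau> \<in> Pi\<^sub>E UNIV U"
      "Pi\<^sub>E UNIV U \<subseteq> topspace (cantor_top A) - F" using U0 by simp_all
  obtain N where N: "{i \<in> UNIV. U i \<noteq> A} \<subseteq> {..<N}" using finite_nat_bounded[OF U(1)] by blast
  obtain \<rho> where \<rho>: "\<rho> \<in> F" "\<forall>j<N. \<rho> j = \<tau> j" using approx by blast
  have "\<rho> \<in> topspace (cantor_top A)" using \<rho>(1) F closedin_subset by blast
  then have rA: "\<And>i. \<rho> i \<in> A" using tsp by auto
  have "\<rho> \<in> Pi\<^sub>E UNIV U"
  proof -
    have "\<rho> i \<in> U i" for i
    proof (cases "U i = A")
      case True then show ?thesis using rA by simp
    next
      case False then have "i < N" using N by auto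
      then show ?thesis using \<rho>(2) U(2) by (auto simp: PiE_def)
    qed
    then show ?thesis by (auto simp: PiE_def)
  qed
  then show False using U(3) \<rho>(1) by blast
qed

lemma alphabet_two: "alphabet two"
  unfolding alphabet_def two_def by simp

lemma alphabet_prod: assumes "alphabet S" "alphabet G" shows "alphabet (prodA S G)"
proof -
  have eq: "prodA S G = (\<lambda>(a,b). LPair a b) ` (S \<times> G)" unfolding prodA_def by auto
  have inj: "inj_on (\<lambda>(a,b). LPair a b) (S \<times> G)" by (auto simp: inj_on_def)
  have c: "card (prodA S G) = card S * card G"
    unfolding eq card_image[OF inj] card_cartesian_product ..
  have "card S * card G \<ge> 2 * 2" using assms unfolding alphabet_def by (intro mult_le_mono) auto
  then show ?thesis using assms c unfolding alphabet_def eq by auto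
qed

locale pf =
  fixes T :: "letter set \<Rightarrow> (nat \<Rightarrow> letter) topology"
    and B :: "letter set \<Rightarrow> (nat \<Rightarrow> letter) set set"
    and S :: "letter set"
  assumes alph: "alphabet S"
    and top: "\<And>S. alphabet S \<Longrightarrow> topspace (T S) = seqs S"
    and basis: "\<And>S. alphabet S \<Longrightarrow> is_basis (T S) (B S)"
    and P1: "\<And>S w. alphabet S \<Longrightarrow> set w \<subseteq> S \<Longrightarrow> cyl S w \<in> B S"
    and P2: "\<And>S L1 L2. alphabet S \<Longrightarrow> L1 \<in> B S \<Longrightarrow> L2 \<in> B S \<Longrightarrow>
               L1 \<union> L2 \<in> B S \<and> L1 \<inter> L2 \<in> B S"
    and P3: "\<And>S G L. alphabet S \<Longrightarrow> alphabet G \<Longrightarrow> L \<in> B (prodA S G) \<Longrightarrow>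
               proj0 ` L \<in> B S"
    and P4: "\<And>S L. alphabet S \<Longrightarrow> L \<in> B S \<Longrightarrow>
               \<exists>C \<in> B (prodA S two). C \<subseteq> seqs_Pinf S \<and>
                 (\<exists>F. closedin (cantor_top (prodA S two)) F \<and> C = F \<inter> seqs_Pinf S) \<and>
                 L = proj0 ` C"
begin

abbreviation "S2 \<equiv> prodA S two"

lemma alph2: "alphabet S2" using alphabet_prod[OF alph alphabet_two] .

definition Lof where "Lof U z = (SOME L. L \<in> B S \<and> z \<in> L \<and> L \<subseteq> U)"

lemma Lof: assumes "openin (T S) U" "z \<in> U"
  shows "Lof U z \<in> B S \<and> z \<in> Lof U z \<and> Lof U z \<subseteq> U"
proof -
  from basis[OF alph] assms obtain B' where "B' \<subseteq> B S" "\<Union>B' = U" unfolding is_basis_def by blast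
  then have "\<exists>L. L \<in> B S \<and> z \<in> L \<and> L \<subseteq> U" using assms(2) by blast
  then show ?thesis unfolding Lof_def by (rule someI_ex)
qed

definition Cof where "Cof L = (SOME C. C \<in> B S2 \<and> C \<subseteq> seqs_Pinf S \<and>
   (\<exists>F. closedin (cantor_top S2) F \<and> C = F \<inter> seqs_Pinf S) \<and> L = proj0 ` C)"

lemma Cof: assumes "L \<in> B S" shows "Cof L \<in> B S2 \<and> Cof L \<subseteq> seqs_Pinf S \<and>
   (\<exists>F. closedin (cantor_top S2) F \<and> Cof L = F \<inter> seqs_Pinf S) \<and> L = proj0 ` Cof L"
  unfolding Cof_def by (rule someI_ex) (use P4[OF alph assms] in blast)

definition CC where "CC U z = Cof (Lof U z)"

lemma CC: assumes "openin (T S) U" "z \<in> U"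
  shows "CC U z \<in> B S2 \<and> CC U z \<subseteq> seqs_Pinf S \<and>
   (\<exists>F. closedin (cantor_top S2) F \<and> CC U z = F \<inter> seqs_Pinf S) \<and> Lof U z = proj0 ` CC U z"
  unfolding CC_def using Cof Lof[OF assms] by blast

lemma seqs_Pinf_sub: "seqs_Pinf S \<subseteq> seqs S2" unfolding seqs_Pinf_def by auto

lemma cyl_Nil: "cyl A [] = seqs A" unfolding cyl_def by auto

lemma base_mem: assumes "openin (T S) U" "z \<in> U"
  shows "z \<in> proj0 ` (CC U z \<inter> cyl S2 [])"
  using CC[OF assms] Lof[OF assms] seqs_Pinf_sub unfolding cyl_Nil by blast

definition good where "good C t t' z \<longleftrightarrow> (\<exists>w. t' = t @ w) \<and>
   (\<exists>k. length t \<le> k \<and> k < length t' \<and> lsnd (t' ! k) = Atom 1) \<and> set t' \<subseteq> S2 \<and>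
   z \<in> proj0 ` (C \<inter> cyl S2 t')"

definition extd where "extd C t z = (SOME t'. good C t t' z)"

lemma good_exists: assumes "C \<subseteq> seqs_Pinf S" "z \<in> proj0 ` (C \<inter> cyl S2 t)"
  shows "\<exists>t'. good C t t' z"
proof -
  obtain \<rho> where \<rho>: "\<rho> \<in> C" "\<rho> \<in> cyl S2 t" "z = proj0 \<rho>" using assms(2) by blast
  have "\<rho> \<in> seqs_Pinf S" using \<rho> assms(1) by blast
  then have inf: "infinite {i. proj1 \<rho> i = Atom 1}" and rs: "\<rho> \<in> seqs S2"
    unfolding seqs_Pinf_def Pinf_def by auto
  then obtain k where k: "k \<ge> length t" "proj1 \<rho> k = Atom 1"
    unfolding infinite_nat_iff_unbounded_le by blast
  define t' where "t' = map \<rho> [0..<Suc k]"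
  have lt': "length t' = Suc k" unfolding t'_def by simp
  have "take (length t) t' = t"
  proof (rule nth_equalityI)
    show "length (take (length t) t') = length t" using k(1) lt' by simp
    fix i assume "i < length (take (length t) t')"
    then have i: "i < length t" "i < Suc k" using k(1) lt' by auto
    have "take (length t) t' ! i = \<rho> i" using i unfolding t'_def
      by (simp del: upt_Suc)
    also have "\<dots> = t ! i" using \<rho>(2) i unfolding cyl_def by auto
    finally show "take (length t) t' ! i = t ! i" .
  qed
  then have "t' = t @ drop (length t) t'" by (metis append_take_drop_id)
  moreover have "lsnd (t' ! k) = Atom 1" using k(2) unfolding t'_def proj1_def
    by (simp del: upt_Suc)
  moreover have "set t' \<subseteq> S2" using rs unfolding t'_def seqs_def by auto
  moreover have "\<rho> \<in> cyl S2 t'" using rs unfolding cyl_def t'_def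
    by (auto simp del: upt_Suc)
  ultimately have "good C t t' z" unfolding good_def using k(1) lt' \<rho>
    by (intro conjI exI[of _ "drop (length t) t'"] exI[of _ k]) auto
  then show ?thesis by blast
qed

lemma extd: assumes "C \<subseteq> seqs_Pinf S" "z \<in> proj0 ` (C \<inter> cyl S2 t)"
  shows "good C t (extd C t z) z"
  unfolding extd_def using good_exists[OF assms] by (rule someI_ex)

end
context pf begin

primrec tt where
  "tt 0 u x = (\<lambda>i. [])"
| "tt (Suc n) u x = (\<lambda>i. if i \<le> n then extd (CC (u i) (x i)) (tt n u x i) (x (Suc n)) else [])"

definition VV where "VV n u x = Lof (u n) (x n) \<inter> cyl S (map (x n) [0..<n]) \<inter>
   (\<Inter>i\<in>{..n}. proj0 ` (CC (u i) (x i) \<inter> cyl S2 (tt n u x i)))"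

definition str where "str h = VV (length h - 1) (\<lambda>i. fst (h!i)) (\<lambda>i. snd (h!i))"

lemma tt_cong: "(\<forall>k\<le>n. u k = u' k \<and> x k = x' k) \<Longrightarrow> tt n u x = tt n u' x'"
proof (induction n)
  case 0 then show ?case by simp
next
  case (Suc n)
  then have "tt n u x = tt n u' x'" by simp
  then show ?case using Suc.prems by (auto intro!: ext)
qed

lemma VV_cong: assumes "\<forall>k\<le>n. u k = u' k \<and> x k = x' k" shows "VV n u x = VV n u' x'"
proof -
  have t: "tt n u x = tt n u' x'" using tt_cong[OF assms] .
  have "(\<Inter>i\<in>{..n}. proj0 ` (CC (u i) (x i) \<inter> cyl S2 (tt n u x i))) =
        (\<Inter>i\<in>{..n}. proj0 ` (CC (u' i) (x' i) \<inter> cyl S2 (tt n u' x' i)))"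
    using assms t by (intro INF_cong) auto
  then show ?thesis unfolding VV_def using assms by auto
qed

lemma resp_str: "resp str u x n = VV n u x"
proof -
  have e: "length (map (\<lambda>i. (u i, x i)) [0..<Suc n]) - 1 = n" by simp
  show ?thesis unfolding resp_def str_def e
    by (rule VV_cong) (auto simp del: upt_Suc)
qed

lemma INT_B: "(\<forall>i\<le>n. P i \<in> B S) \<Longrightarrow> (\<Inter>i\<in>{..(n::nat)}. P i) \<in> B S"
proof (induction n)
  case 0 then show ?case by simp
next
  case (Suc n)
  then have "(\<Inter>i\<in>{..n}. P i) \<in> B S" "P (Suc n) \<in> B S" by auto
  then show ?case using P2[OF alph] by (simp add: atMost_Suc)
qed

lemma legal_open: "p1_legal (T S) s u x k \<Longrightarrow> openin (T S) (u k) \<and> x k \<in> u k"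
  unfolding p1_legal_def by blast

lemma legal_le: "\<forall>k\<le>n. p1_legal (T S) s u x k \<Longrightarrow> i \<le> n \<Longrightarrow> openin (T S) (u i) \<and> x i \<in> u i"
  unfolding p1_legal_def by blast

lemma inv_step:
  assumes leg: "\<forall>k\<le>Suc n. p1_legal (T S) str u x k"
    and I: "\<forall>i\<le>n. set (tt n u x i) \<subseteq> S2 \<and> x n \<in> proj0 ` (CC (u i) (x i) \<inter> cyl S2 (tt n u x i))"
    and i: "i \<le> n"
  shows "good (CC (u i) (x i)) (tt n u x i) (tt (Suc n) u x i) (x (Suc n))"
proof -
  have li: "openin (T S) (u i) \<and> x i \<in> u i" using legal_le[OF leg, of i] i by simp
  have "x (Suc n) \<in> u (Suc n)" "u (Suc n) \<subseteq> resp str u x n"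
    using leg unfolding p1_legal_def by auto
  then have "x (Suc n) \<in> VV n u x" using resp_str by auto
  then have "x (Suc n) \<in> proj0 ` (CC (u i) (x i) \<inter> cyl S2 (tt n u x i))"
    unfolding VV_def using i by auto
  then show ?thesis using extd CC li i by auto
qed

lemma inv:
  assumes "\<forall>k\<le>n. p1_legal (T S) str u x k"
  shows "\<forall>i\<le>n. set (tt n u x i) \<subseteq> S2 \<and> x n \<in> proj0 ` (CC (u i) (x i) \<inter> cyl S2 (tt n u x i))"
  using assms
proof (induction n)
  case 0
  then have "openin (T S) (u 0) \<and> x 0 \<in> u 0" using legal_le by blast
  then show ?case using base_mem by auto
next
  case (Suc n)
  then have IH: "\<forall>i\<le>n. set (tt n u x i) \<subseteq> S2 \<and> x n \<in> proj0 ` (CC (u i) (x i) \<inter> cyl S2 (tt n u x i))"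
    by auto
  show ?case
  proof (intro allI impI)
    fix i assume i: "i \<le> Suc n"
    show "set (tt (Suc n) u x i) \<subseteq> S2 \<and> x (Suc n) \<in> proj0 ` (CC (u i) (x i) \<inter> cyl S2 (tt (Suc n) u x i))"
    proof (cases "i \<le> n")
      case True
      then show ?thesis using inv_step[OF Suc.prems IH True] unfolding good_def by blast
    next
      case False
      then have "i = Suc n" using i by auto
      moreover have "openin (T S) (u (Suc n)) \<and> x (Suc n) \<in> u (Suc n)"
        using legal_le[OF Suc.prems] by blast
      ultimately show ?thesis using base_mem by auto
    qed
  qed
qed

lemma VV_props:
  assumes leg: "\<forall>k\<le>n. p1_legal (T S) str u x k"
  shows "VV n u x \<in> B S \<and> x n \<in> VV n u x \<and> VV n u x \<subseteq> u n"
proof -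
  have ln: "openin (T S) (u n) \<and> x n \<in> u n" using legal_le[OF leg] by blast
  note L = Lof[OF ln[THEN conjunct1] ln[THEN conjunct2]]
  have xs: "x n \<in> seqs S" using ln openin_subset top[OF alph] by blast
  have c: "cyl S (map (x n) [0..<n]) \<in> B S" using xs by (intro P1[OF alph]) (auto simp: seqs_def)
  have I: "\<forall>i\<le>n. set (tt n u x i) \<subseteq> S2 \<and> x n \<in> proj0 ` (CC (u i) (x i) \<inter> cyl S2 (tt n u x i))"
    using inv[OF leg] .
  have "\<forall>i\<le>n. proj0 ` (CC (u i) (x i) \<inter> cyl S2 (tt n u x i)) \<in> B S"
  proof (intro allI impI)
    fix i assume i: "i \<le> n"
    have li: "openin (T S) (u i) \<and> x i \<in> u i" using legal_le[OF leg i] .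
    have "CC (u i) (x i) \<in> B S2" using CC li by blast
    moreover have "cyl S2 (tt n u x i) \<in> B S2" using I i P1[OF alph2] by blast
    ultimately have "CC (u i) (x i) \<inter> cyl S2 (tt n u x i) \<in> B S2" using P2[OF alph2] by blast
    then show "proj0 ` (CC (u i) (x i) \<inter> cyl S2 (tt n u x i)) \<in> B S"
      using P3[OF alph alphabet_two] by blast
  qed
  then have "(\<Inter>i\<in>{..n}. proj0 ` (CC (u i) (x i) \<inter> cyl S2 (tt n u x i))) \<in> B S" by (rule INT_B)
  then have INTB: "(\<Inter>i\<in>{..n}. proj0 ` (CC (u i) (x i) \<inter> cyl S2 (tt n u x i))) \<in> B S" .
  have LB: "Lof (u n) (x n) \<in> B S" using L by blast
  have "Lof (u n) (x n) \<inter> cyl S (map (x n) [0..<n]) \<in> B S" using P2[OF alph LB c] by blast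
  then have "VV n u x \<in> B S" unfolding VV_def using P2[OF alph _ INTB] by blast
  moreover have "x n \<in> cyl S (map (x n) [0..<n])" using xs unfolding cyl_def by simp
  moreover have "x n \<in> (\<Inter>i\<in>{..n}. proj0 ` (CC (u i) (x i) \<inter> cyl S2 (tt n u x i)))"
    using I by blast
  ultimately have "VV n u x \<in> B S \<and> x n \<in> VV n u x" unfolding VV_def using L by blast
  moreover have "VV n u x \<subseteq> u n" unfolding VV_def using L by blast
  ultimately show ?thesis by blast
qed

end
context pf begin

lemma final:
  assumes leg: "\<forall>k. p1_legal (T S) str u x k"
  shows "(\<Inter>n. resp str u x n) \<noteq> {}"
proof -
  have legn: "\<forall>k\<le>n. p1_legal (T S) str u x k" for n using leg by blast
  have I: "\<forall>i\<le>n. set (tt n u x i) \<subseteq> S2 \<and> x n \<in> proj0 ` (CC (u i) (x i) \<inter> cyl S2 (tt n u x i))" for n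
    using inv[OF legn] .
  have F1: "good (CC (u i) (x i)) (tt n u x i) (tt (Suc n) u x i) (x (Suc n))" if "i \<le> n" for n i
    using inv_step[OF legn I that] .
  have F2: "tt i u x i = []" for i by (cases i) auto
  have F3: "\<exists>w. tt m u x i = tt n u x i @ w" if "i \<le> n" "n \<le> m" for i n m
    using that(2)
  proof (induction m rule: dec_induct)
    case base then show ?case by simp
  next
    case (step m)
    then obtain w where w: "tt m u x i = tt n u x i @ w" by blast
    have im: "i \<le> m" using that(1) step.hyps(1) by simp
    obtain w' where "tt (Suc m) u x i = tt m u x i @ w'"
      using F1[OF im] unfolding good_def by blast
    then show ?case using w by auto
  qed
  have F4: "n - i \<le> length (tt n u x i)" if "i \<le> n" for i n
    using that
  proof (induction n rule: dec_induct)
    case base then show ?case by simp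
  next
    case (step n)
    have "length (tt n u x i) < length (tt (Suc n) u x i)"
      using F1[OF step.hyps(1)] unfolding good_def by fastforce
    then show ?case using step by linarith
  qed
  have VVsub: "VV m u x \<subseteq> VV n u x" if "n \<le> m" for n m
    using that
  proof (induction m rule: dec_induct)
    case base then show ?case by simp
  next
    case (step m)
    have "VV (Suc m) u x \<subseteq> u (Suc m)" using VV_props[OF legn] by blast
    also have "\<dots> \<subseteq> resp str u x m" using leg unfolding p1_legal_def by blast
    also have "\<dots> = VV m u x" by (rule resp_str)
    finally show ?case using step by blast
  qed
  have F5: "x m \<in> VV n u x" if "n \<le> m" for n m
    using VV_props[OF legn, of m] VVsub[OF that] by blast
  have F6: "x m k = x n k" if "k < n" "n \<le> m" for k n m
  proof -
    have "x m \<in> cyl S (map (x n) [0..<n])" using F5[OF that(2)] unfolding VV_def by blast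
    then show ?thesis using that(1) unfolding cyl_def by auto
  qed
  have F7: "lfst (tt n u x i ! k) = x n k" if h: "i \<le> n" "k < length (tt n u x i)" for i n k
  proof -
    obtain \<rho> where \<rho>: "\<rho> \<in> cyl S2 (tt n u x i)" "x n = proj0 \<rho>" using I[of n] h(1) by blast
    then show ?thesis using h(2) unfolding cyl_def proj0_def by auto
  qed
  define \<tau> where "\<tau> i k = tt (i + Suc k) u x i ! k" for i k
  define X where "X k = x (Suc k) k" for k
  have lm: "k < length (tt (i + Suc k) u x i)" for i k using F4[of i "i + Suc k"] by simp
  have F8: "\<tau> i k = tt n u x i ! k" if h: "i \<le> n" "k < length (tt n u x i)" for i n k
  proof (cases "n \<le> i + Suc k")
    case True
    then obtain w where "tt (i + Suc k) u x i = tt n u x i @ w" using F3[OF h(1) True] by blast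
    then show ?thesis unfolding \<tau>_def using h(2) by (simp add: nth_append)
  next
    case False
    then obtain w where "tt n u x i = tt (i + Suc k) u x i @ w" using F3[of i "i + Suc k" n] by auto
    then show ?thesis unfolding \<tau>_def using lm[of k i] by (simp add: nth_append)
  qed
  have F9: "proj0 (\<tau> i) = X" for i
  proof
    fix k
    have "lfst (\<tau> i k) = x (i + Suc k) k" unfolding \<tau>_def using F7[of i "i + Suc k" k] lm by simp
    also have "\<dots> = x (Suc k) k" using F6[of k "Suc k" "i + Suc k"] by simp
    finally show "proj0 (\<tau> i) k = X k" unfolding proj0_def X_def .
  qed
  have F10: "\<tau> i \<in> seqs S2" for i
  proof -
    have "\<tau> i k \<in> S2" for k
    proof -
      have "set (tt (i + Suc k) u x i) \<subseteq> S2" using I[of "i + Suc k"] le_add1 by blast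
      then show ?thesis using nth_mem[OF lm[of k i]] unfolding \<tau>_def by blast
    qed
    then show ?thesis unfolding seqs_def by blast
  qed
  have F11: "proj1 (\<tau> i) \<in> Pinf" for i
  proof -
    have "lsnd (\<tau> i k) \<in> two" for k
    proof -
      obtain a b where "\<tau> i k = LPair a b" "b \<in> two" using F10[of i] unfolding seqs_def prodA_def by blast
      then show ?thesis by simp
    qed
    then have "proj1 (\<tau> i) \<in> seqs two" unfolding seqs_def proj1_def by auto
    moreover have "infinite {k. proj1 (\<tau> i) k = Atom 1}"
      unfolding infinite_nat_iff_unbounded_le
    proof
      fix N
      obtain k where k: "length (tt (i + N) u x i) \<le> k" "k < length (tt (Suc (i + N)) u x i)"
          "lsnd (tt (Suc (i + N)) u x i ! k) = Atom 1"
        using F1[of i "i + N"] unfolding good_def by (meson le_add1)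
      have "N \<le> k" using F4[of i "i + N"] k(1) by simp
      moreover have "\<tau> i k = tt (Suc (i + N)) u x i ! k" using F8[of i "Suc (i + N)" k] k(2) by simp
      ultimately show "\<exists>k\<ge>N. k \<in> {k. proj1 (\<tau> i) k = Atom 1}" using k(3) unfolding proj1_def by auto
    qed
    ultimately show ?thesis unfolding Pinf_def by blast
  qed
  have F12: "\<tau> i \<in> CC (u i) (x i)" for i
  proof -
    have li: "openin (T S) (u i) \<and> x i \<in> u i" using legal_le[OF legn[of i]] by simp
    obtain F where F: "closedin (cantor_top S2) F" "CC (u i) (x i) = F \<inter> seqs_Pinf S"
      using CC[OF li[THEN conjunct1] li[THEN conjunct2]] by blast
    have "\<tau> i \<in> F"
    proof (rule closed_lim[OF F(1) F10])
      fix N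
      obtain \<rho> where \<rho>: "\<rho> \<in> CC (u i) (x i)" "\<rho> \<in> cyl S2 (tt (i + N) u x i)"
      proof -
        have "x (i + N) \<in> proj0 ` (CC (u i) (x i) \<inter> cyl S2 (tt (i + N) u x i))"
          using I[of "i + N"] le_add1 by blast
        then show ?thesis using that by blast
      qed
      have "\<forall>j<N. \<rho> j = \<tau> i j"
      proof (intro allI impI)
        fix j assume "j < N"
        then have "j < length (tt (i + N) u x i)" using F4[of i "i + N"] by simp
        then show "\<rho> j = \<tau> i j" using \<rho>(2) F8[of i "i + N" j] unfolding cyl_def by simp
      qed
      then show "\<exists>\<rho>\<in>F. \<forall>j<N. \<rho> j = \<tau> i j" using \<rho>(1) F(2) by blast
    qed
    moreover have "\<tau> i \<in> seqs_Pinf S" using F10 F11 unfolding seqs_Pinf_def by blast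
    ultimately show ?thesis using F(2) by blast
  qed
  have F13: "X \<in> VV n u x" for n
  proof -
    have ln: "openin (T S) (u n) \<and> x n \<in> u n" using legal_le[OF legn[of n]] by simp
    have "X \<in> Lof (u n) (x n)" using CC[OF ln[THEN conjunct1] ln[THEN conjunct2]] F12[of n] F9[of n] by blast
    moreover have "X \<in> cyl S (map (x n) [0..<n])"
    proof -
      have "x (Suc k) \<in> seqs S" for k
        using legal_le[OF legn[of "Suc k"], of "Suc k"] openin_subset top[OF alph] by blast
      then have "X \<in> seqs S" unfolding X_def seqs_def by auto
      moreover have "X k = x n k" if "k < n" for k using F6[of k "Suc k" n] that unfolding X_def by simp
      ultimately show ?thesis unfolding cyl_def by simp
    qed
    moreover have "X \<in> proj0 ` (CC (u i) (x i) \<inter> cyl S2 (tt n u x i))" if "i \<le> n" for i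
    proof -
      have "\<tau> i \<in> cyl S2 (tt n u x i)" using F10[of i] F8[OF that] unfolding cyl_def by simp
      then show ?thesis using F12[of i] F9[of i] by blast
    qed
    ultimately show ?thesis unfolding VV_def by blast
  qed
  then have "X \<in> (\<Inter>n. resp str u x n)" using resp_str by simp
  then show ?thesis by blast
qed

end
theorem theorem3p1:
  fixes T :: "letter set \<Rightarrow> (nat \<Rightarrow> letter) topology"
    and B :: "letter set \<Rightarrow> (nat \<Rightarrow> letter) set set"
  assumes top: "\<And>S. alphabet S \<Longrightarrow> topspace (T S) = seqs S"
    and basis: "\<And>S. alphabet S \<Longrightarrow> is_basis (T S) (B S)"
    and P1: "\<And>S w. alphabet S \<Longrightarrow> set w \<subseteq> S \<Longrightarrow> cyl S w \<in> B S"
    and P2: "\<And>S L1 L2. alphabet S \<Longrightarrow> L1 \<in> B S \<Longrightarrow> L2 \<in> B S \<Longrightarrow>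
               L1 \<union> L2 \<in> B S \<and> L1 \<inter> L2 \<in> B S"
    and P3: "\<And>S G L. alphabet S \<Longrightarrow> alphabet G \<Longrightarrow> L \<in> B (prodA S G) \<Longrightarrow>
               proj0 ` L \<in> B S"
    and P4: "\<And>S L. alphabet S \<Longrightarrow> L \<in> B S \<Longrightarrow>
               \<exists>C \<in> B (prodA S two). C \<subseteq> seqs_Pinf S \<and>
                 (\<exists>F. closedin (cantor_top (prodA S two)) F \<and> C = F \<inter> seqs_Pinf S) \<and>
                 L = proj0 ` C"
  shows "\<forall>S. alphabet S \<longrightarrow> strong_choquet (T S)"
proof (intro allI impI)
  fix S assume a: "alphabet S"
  interpret pf T B S unfolding pf_def using a top basis P1 P2 P3 P4 by blast
  have ne: "topspace (T S) \<noteq> {}"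
  proof -
    have "S \<noteq> {}" using a unfolding alphabet_def by auto
    then obtain c where "c \<in> S" by blast
    then have "(\<lambda>_. c) \<in> seqs S" unfolding seqs_def by simp
    then show ?thesis using top[OF a] by auto
  qed
  have G1: "\<forall>u x n. (\<forall>k\<le>n. p1_legal (T S) str u x k) \<longrightarrow>
      openin (T S) (resp str u x n) \<and> x n \<in> resp str u x n \<and> resp str u x n \<subseteq> u n"
  proof (intro allI impI)
    fix u x n assume l: "\<forall>k\<le>n. p1_legal (T S) str u x k"
    have "VV n u x \<in> B S \<and> x n \<in> VV n u x \<and> VV n u x \<subseteq> u n" using VV_props[OF l] .
    moreover have "\<forall>U\<in>B S. openin (T S) U" using basis[OF a] unfolding is_basis_def by blast
    ultimately show "openin (T S) (resp str u x n) \<and> x n \<in> resp str u x n \<and> resp str u x n \<subseteq> u n"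
      unfolding resp_str by blast
  qed
  have G2: "\<forall>u x. (\<forall>k. p1_legal (T S) str u x k) \<longrightarrow> (\<Inter>n. resp str u x n) \<noteq> {}"
    using final by blast
  show "strong_choquet (T S)" unfolding strong_choquet_def using ne G1 G2 by blast
qed

end
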